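(* Let $C=\sup_{\xi>0}|1-e^{-\xi}|\,|\xi|^{-1}$ and $B=\sup_{0<\xi\le\log 2}|\xi|\,|1-e^{-\xi}|^{-1}$. For probability densities $f,g$ on $\mathbb{N}$ and every $r\ge1$, $$d_r^*(f,g)\le C^r d_r(f,g)\qquad\text{and}\qquad d_r(f,g)\le\max\{2^{r+1},B^rd_r^*(f,g)\}.$$ Moreover, if $M_1(f)=M_1(g)$ and $M_r(f),M_r(g)$ are finite for some $r\in(1,2]$, then $d_r^*(f,g)\le c_r[M_r(f)+M_r(g)]$ for a suitable constant $c_r$ depending only on $r$.
   Context: For a probability density $f$ on $\mathbb{N}$: $\hat f(z)=\sum_vz^vf(v)$, $z\in[0,1]$; $\tilde f(\xi)=\sum_ve^{-\xi v}f(v)$, $\xi>0$; $M_r(f)=\sum_vv^rf(v)$. The metrics are $d_r(f,g)=\sup_{z\in(0,1)}|\hat f(z)-\hat g(z)|/|1-z|^r$ and $d_r^*(f,g)=\sup_{\xi>0}|\tilde f(\xi)-\tilde g(\xi)|/\xi^r$. *)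

theory Defs
  imports "HOL-Analysis.Analysis"
begin

definition prob_density :: "(nat \<Rightarrow> real) \<Rightarrow> bool" where
  "prob_density f \<longleftrightarrow> (\<forall>v. 0 \<le> f v) \<and> f sums 1"

definition gen_fun :: "(nat \<Rightarrow> real) \<Rightarrow> real \<Rightarrow> real" where
  "gen_fun f z = (\<Sum>v. z ^ v * f v)"

definition lap_fun :: "(nat \<Rightarrow> real) \<Rightarrow> real \<Rightarrow> real" where
  "lap_fun f \<xi> = (\<Sum>v. exp (- \<xi> * real v) * f v)"

definition moment :: "real \<Rightarrow> (nat \<Rightarrow> real) \<Rightarrow> ereal" where
  "moment r f = (\<Sum>v. ereal (real v powr r * f v))"

definition d_metric :: "real \<Rightarrow> (nat \<Rightarrow> real) \<Rightarrow> (nat \<Rightarrow> real) \<Rightarrow> ereal" where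
  "d_metric r f g = (SUP z\<in>{0<..<1}. ereal (\<bar>gen_fun f z - gen_fun g z\<bar> / \<bar>1 - z\<bar> powr r))"

definition d_star :: "real \<Rightarrow> (nat \<Rightarrow> real) \<Rightarrow> (nat \<Rightarrow> real) \<Rightarrow> ereal" where
  "d_star r f g = (SUP \<xi>\<in>{0<..}. ereal (\<bar>lap_fun f \<xi> - lap_fun g \<xi>\<bar> / \<bar>\<xi>\<bar> powr r))"

definition constC :: real where
  "constC = (SUP \<xi>\<in>{0<..}. \<bar>1 - exp (- \<xi>)\<bar> / \<bar>\<xi>\<bar>)"

definition constB :: real where
  "constB = (SUP \<xi>\<in>{0<..ln 2}. \<bar>\<xi>\<bar> / \<bar>1 - exp (- \<xi>)\<bar>)"

end

theory Submission
  imports Defs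
begin

lemma pd_basic:
  assumes "prob_density f"
  shows "summable f" "suminf f = 1" "\<And>v. 0 \<le> f v"
  using assms unfolding prob_density_def by (auto simp: sums_iff)

lemma gen_summable:
  assumes "prob_density f" "0 \<le> z" "z \<le> 1"
  shows "summable (\<lambda>v. z ^ v * f v)"
proof (rule summable_comparison_test'[OF pd_basic(1)[OF assms(1)]])
  fix n :: nat
  have "z ^ n \<le> 1" using assms by (simp add: power_le_one)
  then show "norm (z ^ n * f n) \<le> f n"
    using pd_basic(3)[OF assms(1), of n] assms
    by (simp add: abs_mult mult_left_le_one_le)
qed

lemma gen_bounds:
  assumes "prob_density f" "0 \<le> z" "z \<le> 1"
  shows "0 \<le> gen_fun f z" "gen_fun f z \<le> 1"
proof -
  show "0 \<le> gen_fun f z" unfolding gen_fun_def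
    using gen_summable[OF assms] pd_basic(3)[OF assms(1)] assms
    by (intro suminf_nonneg) auto
  have "gen_fun f z \<le> suminf f" unfolding gen_fun_def
  proof (rule suminf_le[OF _ gen_summable[OF assms] pd_basic(1)[OF assms(1)]])
    fix n
    have "z ^ n \<le> 1" using assms by (simp add: power_le_one)
    then show "z ^ n * f n \<le> f n"
      using pd_basic(3)[OF assms(1), of n] assms by (simp add: mult_left_le_one_le)
  qed
  then show "gen_fun f z \<le> 1" using pd_basic(2)[OF assms(1)] by simp
qed

lemma lap_gen: "lap_fun f \<xi> = gen_fun f (exp (- \<xi>))"
proof -
  have "\<And>v. exp (- \<xi> * real v) = exp (- \<xi>) ^ v"
    by (metis exp_of_nat_mult mult.commute)
  then show ?thesis unfolding lap_fun_def gen_fun_def by simp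
qed

lemma C_bound:
  fixes \<xi> :: real
  assumes "0 < \<xi>"
  shows "\<bar>1 - exp (- \<xi>)\<bar> / \<bar>\<xi>\<bar> \<le> constC"
proof -
  have bd: "bdd_above ((\<lambda>\<xi>::real. \<bar>1 - exp (- \<xi>)\<bar> / \<bar>\<xi>\<bar>) ` {0<..})"
  proof (rule bdd_aboveI2[where M=1])
    fix x :: real assume "x \<in> {0<..}"
    hence x: "0 < x" by simp
    have "1 - x \<le> exp (- x)" using exp_ge_add_one_self[of "-x"] by simp
    moreover have "exp (-x) \<le> 1" using x by simp
    ultimately have "\<bar>1 - exp (- x)\<bar> \<le> \<bar>x\<bar>" using x by linarith
    then show "\<bar>1 - exp (- x)\<bar> / \<bar>x\<bar> \<le> 1" using x by (simp add: divide_le_eq)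
  qed
  show ?thesis unfolding constC_def using assms by (intro cSUP_upper[OF _ bd]) auto
qed

lemma B_bound:
  fixes \<xi> :: real
  assumes "0 < \<xi>" "\<xi> \<le> ln 2"
  shows "\<bar>\<xi>\<bar> / \<bar>1 - exp (- \<xi>)\<bar> \<le> constB"
proof -
  have bd: "bdd_above ((\<lambda>\<xi>::real. \<bar>\<xi>\<bar> / \<bar>1 - exp (- \<xi>)\<bar>) ` {0<..ln 2})"
  proof (rule bdd_aboveI2[where M=2])
    fix x :: real assume "x \<in> {0<..ln 2}"
    hence x: "0 < x" "x \<le> ln 2" by auto
    have e1: "1 + x \<le> exp x" by simp
    have "exp x \<le> 2" using x by (metis exp_ln exp_le_cancel_iff zero_less_numeral)
    have ex: "exp (-x) * exp x = 1" by (simp add: exp_minus)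
    have "x * exp (-x) \<le> 1 - exp (-x)"
    proof -
      have "x * exp (-x) \<le> (exp x - 1) * exp (-x)" using e1 by (intro mult_right_mono) (auto simp del: exp_ge_add_one_self)
      also have "\<dots> = 1 - exp (-x)" using ex by (simp add: algebra_simps)
      finally show ?thesis .
    qed
    moreover have pos: "0 < 1 - exp (-x)" using x by simp
    ultimately have "x \<le> (1 - exp (-x)) * exp x"
      using ex by (metis exp_gt_zero mult.assoc mult.commute mult_le_cancel_right_pos mult_1)
    also have "\<dots> \<le> (1 - exp (-x)) * 2" using \<open>exp x \<le> 2\<close> pos by (intro mult_left_mono) auto
    finally show "\<bar>x\<bar> / \<bar>1 - exp (- x)\<bar> \<le> 2" using x pos by (simp add: divide_le_eq)
  qed
  show ?thesis unfolding constB_def using assms by (intro cSUP_upper[OF _ bd]) auto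
qed

lemma key_ineq:
  fixes x r :: real
  assumes "0 \<le> x" "1 \<le> r" "r \<le> 2"
  shows "0 \<le> exp (-x) - 1 + x" "exp (-x) - 1 + x \<le> x powr r"
proof -
  show "0 \<le> exp (-x) - 1 + x" using exp_ge_add_one_self[of "-x"] by simp
  have q: "1 + x + x\<^sup>2 / 2 \<le> exp x" using exp_lower_Taylor_quadratic[OF assms(1)] .
  have qp: "0 < 1 + x + x\<^sup>2 / 2" using assms(1) by (simp add: add_pos_nonneg)
  have prod: "1 \<le> (1 - x + x\<^sup>2) * (1 + x + x\<^sup>2 / 2)"
  proof -
    have "(1 - x + x\<^sup>2) * (1 + x + x\<^sup>2 / 2) = 1 + x\<^sup>2/2 + x^3/2 + x^4/2"
      by (simp add: field_simps power2_eq_square power3_eq_cube power4_eq_xxxx)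
    moreover have "0 \<le> x\<^sup>2/2 + x^3/2 + x^4/2" using assms(1) by simp
    ultimately show ?thesis by linarith
  qed
  have "exp (-x) = 1 / exp x" by (simp add: exp_minus field_simps)
  also have "\<dots> \<le> 1 / (1 + x + x\<^sup>2 / 2)" using q qp by (intro divide_left_mono) auto
  also have "\<dots> \<le> 1 - x + x\<^sup>2" using prod qp by (simp add: divide_le_eq mult.commute)
  finally have e2: "exp (-x) - 1 + x \<le> x\<^sup>2" by simp
  have e1: "exp (-x) - 1 + x \<le> x" using assms(1) by simp
  show "exp (-x) - 1 + x \<le> x powr r"
  proof (cases "x \<le> 1")
    case True
    have "x\<^sup>2 = x powr 2" using assms(1) by simp
    also have "\<dots> \<le> x powr r" using True assms by (intro powr_mono') auto
    finally show ?thesis using e2 by simp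
  next
    case False
    have "x = x powr 1" using assms(1) by (simp add: powr_one)
    also have "\<dots> \<le> x powr r" using False assms by (intro powr_mono) auto
    finally show ?thesis using e1 by linarith
  qed
qed

lemma moment_fin:
  assumes "prob_density f" "moment r f < \<infinity>"
  shows "summable (\<lambda>v. real v powr r * f v)" "moment r f = ereal (\<Sum>v. real v powr r * f v)"
proof -
  have nn: "\<And>v. 0 \<le> real v powr r * f v" using pd_basic(3)[OF assms(1)] by simp
  have ne: "(\<Sum>v. ereal (real v powr r * f v)) \<noteq> \<infinity>" using assms(2) unfolding moment_def by simp
  show "summable (\<lambda>v. real v powr r * f v)" by (rule summable_ereal[OF nn ne])
  show "moment r f = ereal (\<Sum>v. real v powr r * f v)" unfolding moment_def by (rule suminf_ereal[OF nn ne])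
qed

lemma moment1_fin:
  assumes "prob_density f" "moment r f < \<infinity>" "1 \<le> r"
  shows "summable (\<lambda>v. real v * f v)" "moment 1 f = ereal (\<Sum>v. real v * f v)"
proof -
  have s: "summable (\<lambda>v. real v powr r * f v)" using moment_fin[OF assms(1,2)] by simp
  show sm: "summable (\<lambda>v. real v * f v)"
  proof (rule summable_comparison_test'[OF s])
    fix n :: nat
    have "real n \<le> real n powr r"
    proof (cases "n = 0")
      case False
      then have "real n = real n powr 1" by (simp add: powr_one)
      also have "\<dots> \<le> real n powr r" using False assms(3) by (intro powr_mono) auto
      finally show ?thesis .
    qed simp
    then show "norm (real n * f n) \<le> real n powr r * f n"
      using pd_basic(3)[OF assms(1), of n] by (simp add: abs_mult mult_right_mono)
  qed
  have "moment 1 f = (\<Sum>v. ereal (real v * f v))" unfolding moment_def by (simp add: powr_one)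
  also have "\<dots> = ereal (\<Sum>v. real v * f v)" by (rule suminf_ereal'[OF sm])
  finally show "moment 1 f = ereal (\<Sum>v. real v * f v)" .
qed


lemma part3_point:
  fixes r \<xi> :: real
  assumes f: "prob_density f" and g: "prob_density g" and m1: "moment 1 f = moment 1 g"
    and mf: "moment r f < \<infinity>" and mg: "moment r g < \<infinity>" and r: "1 \<le> r" "r \<le> 2" and xi: "0 < \<xi>"
  shows "\<bar>lap_fun f \<xi> - lap_fun g \<xi>\<bar> / \<bar>\<xi>\<bar> powr r
          \<le> (\<Sum>v. real v powr r * f v) + (\<Sum>v. real v powr r * g v)"
proof -
  define a where "a v = exp (- \<xi> * real v)" for v :: nat
  have a01: "0 \<le> a v" "a v \<le> 1" for v using xi by (auto simp: a_def)
  have sa: "summable (\<lambda>v. a v * h v)" if "prob_density h" for h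
    using gen_summable[OF that, of "exp (- \<xi>)"] xi
    by (simp add: a_def exp_of_nat_mult[symmetric] mult.commute)
  have La: "lap_fun h \<xi> = (\<Sum>v. a v * h v)" for h unfolding lap_fun_def a_def by simp
  have s1f: "summable (\<lambda>v. real v * f v)" and e1f: "moment 1 f = ereal (\<Sum>v. real v * f v)"
    using moment1_fin[OF f mf r(1)] by auto
  have s1g: "summable (\<lambda>v. real v * g v)" and e1g: "moment 1 g = ereal (\<Sum>v. real v * g v)"
    using moment1_fin[OF g mg r(1)] by auto
  have eq1: "(\<Sum>v. real v * f v) = (\<Sum>v. real v * g v)" using m1 e1f e1g by simp
  have srf: "summable (\<lambda>v. real v powr r * f v)" using moment_fin[OF f mf] by simp
  have srg: "summable (\<lambda>v. real v powr r * g v)" using moment_fin[OF g mg] by simp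
  define h where "h v = (a v - 1 + \<xi> * real v) * (f v - g v)" for v
  have hs: "h sums ((lap_fun f \<xi> - lap_fun g \<xi>) - (suminf f - suminf g)
              + \<xi> * ((\<Sum>v. real v * f v) - (\<Sum>v. real v * g v)))"
  proof -
    have "(\<lambda>v. (a v * f v - a v * g v) - (f v - g v) + \<xi> * (real v * f v - real v * g v)) sums
          ((lap_fun f \<xi> - lap_fun g \<xi>) - (suminf f - suminf g)
              + \<xi> * ((\<Sum>v. real v * f v) - (\<Sum>v. real v * g v)))"
      unfolding La
      by (intro sums_add sums_diff sums_mult summable_sums sa f g pd_basic(1) s1f s1g)
    moreover have "(\<lambda>v. (a v * f v - a v * g v) - (f v - g v) + \<xi> * (real v * f v - real v * g v)) = h"
      by (auto simp: h_def algebra_simps)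
    ultimately show ?thesis by simp
  qed
  then have hsum: "suminf h = lap_fun f \<xi> - lap_fun g \<xi>"
    using eq1 pd_basic(2)[OF f] pd_basic(2)[OF g] by (simp add: sums_iff)
  define Mf where "Mf = (\<Sum>v. real v powr r * f v)"
  define Mg where "Mg = (\<Sum>v. real v powr r * g v)"
  have hb: "\<bar>h v\<bar> \<le> \<xi> powr r * (real v powr r * f v + real v powr r * g v)" for v
  proof -
    have k: "0 \<le> a v - 1 + \<xi> * real v" "a v - 1 + \<xi> * real v \<le> (\<xi> * real v) powr r"
      using key_ineq[of "\<xi> * real v" r] xi r by (auto simp: a_def)
    have fg: "\<bar>f v - g v\<bar> \<le> f v + g v" using pd_basic(3)[OF f, of v] pd_basic(3)[OF g, of v] by simp
    have "\<bar>h v\<bar> = (a v - 1 + \<xi> * real v) * \<bar>f v - g v\<bar>" using k by (simp add: h_def abs_mult)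
    also have "\<dots> \<le> (\<xi> * real v) powr r * (f v + g v)"
      using k fg by (intro mult_mono) auto
    also have "\<dots> = \<xi> powr r * (real v powr r * f v + real v powr r * g v)"
      using xi by (simp add: powr_mult algebra_simps)
    finally show ?thesis .
  qed
  have sb: "summable (\<lambda>v. \<xi> powr r * (real v powr r * f v + real v powr r * g v))"
    by (intro summable_mult summable_add srf srg)
  have sh: "summable (\<lambda>v. \<bar>h v\<bar>)"
    by (rule summable_comparison_test'[OF sb]) (use hb in simp)
  have "\<bar>lap_fun f \<xi> - lap_fun g \<xi>\<bar> \<le> (\<Sum>v. \<bar>h v\<bar>)" using summable_rabs[OF sh] hsum by simp
  also have "\<dots> \<le> (\<Sum>v. \<xi> powr r * (real v powr r * f v + real v powr r * g v))"
    by (rule suminf_le[OF hb sh sb])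
  also have "\<dots> = \<xi> powr r * (Mf + Mg)"
    unfolding Mf_def Mg_def by (simp add: suminf_mult suminf_add srf srg summable_add)
  finally have "\<bar>lap_fun f \<xi> - lap_fun g \<xi>\<bar> \<le> \<xi> powr r * (Mf + Mg)" .
  then show ?thesis using xi unfolding Mf_def[symmetric] Mg_def[symmetric]
    by (simp add: divide_le_eq mult.commute)
qed


lemma ratio_split:
  fixes A w y r :: real
  assumes "0 < w" "0 < y"
  shows "A / y powr r = (A / w powr r) * (w / y) powr r"
  using assms by (simp add: powr_divide field_simps)

lemma part1:
  fixes r :: real
  assumes f: "prob_density f" and g: "prob_density g" and r: "1 \<le> r"
  shows "d_star r f g \<le> ereal (constC powr r) * d_metric r f g"
  unfolding d_star_def
proof (rule SUP_least)
  fix \<xi> :: real assume "\<xi> \<in> {0<..}"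
  hence xi: "0 < \<xi>" by simp
  define z where "z = exp (- \<xi>)"
  have z: "0 < z" "z < 1" using xi by (auto simp: z_def)
  have w: "0 < \<bar>1 - z\<bar>" using z by simp
  have C: "\<bar>1 - z\<bar> / \<bar>\<xi>\<bar> \<le> constC" using C_bound[OF xi] by (simp add: z_def)
  have t1: "ereal (\<bar>gen_fun f z - gen_fun g z\<bar> / \<bar>1 - z\<bar> powr r) \<le> d_metric r f g"
    unfolding d_metric_def using z by (intro SUP_upper) auto
  have t2: "(\<bar>1 - z\<bar> / \<bar>\<xi>\<bar>) powr r \<le> constC powr r"
    using C r by (intro powr_mono2) auto
  have eq: "\<bar>lap_fun f \<xi> - lap_fun g \<xi>\<bar> / \<bar>\<xi>\<bar> powr r =
        (\<bar>gen_fun f z - gen_fun g z\<bar> / \<bar>1 - z\<bar> powr r) * (\<bar>1 - z\<bar> / \<bar>\<xi>\<bar>) powr r"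
    unfolding lap_gen z_def[symmetric] using w xi by (intro ratio_split) auto
  have "ereal (\<bar>lap_fun f \<xi> - lap_fun g \<xi>\<bar> / \<bar>\<xi>\<bar> powr r)
       = ereal ((\<bar>1 - z\<bar> / \<bar>\<xi>\<bar>) powr r) * ereal (\<bar>gen_fun f z - gen_fun g z\<bar> / \<bar>1 - z\<bar> powr r)"
    unfolding eq by (simp add: mult.commute)
  also have "\<dots> \<le> ereal (constC powr r) * d_metric r f g"
    by (rule ereal_mult_mono) (use t1 t2 in auto)
  finally show "ereal (\<bar>lap_fun f \<xi> - lap_fun g \<xi>\<bar> / \<bar>\<xi>\<bar> powr r) \<le> ereal (constC powr r) * d_metric r f g" .
qed

lemma part2:
  fixes r :: real
  assumes f: "prob_density f" and g: "prob_density g" and r: "1 \<le> r"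
  shows "d_metric r f g \<le> max (ereal (2 powr (r + 1))) (ereal (constB powr r) * d_star r f g)"
  unfolding d_metric_def
proof (rule SUP_least)
  fix z :: real assume "z \<in> {0<..<1}"
  hence z: "0 < z" "z < 1" by auto
  show "ereal (\<bar>gen_fun f z - gen_fun g z\<bar> / \<bar>1 - z\<bar> powr r)
        \<le> max (ereal (2 powr (r + 1))) (ereal (constB powr r) * d_star r f g)"
  proof (cases "z < 1/2")
    case True
    have d1: "\<bar>gen_fun f z - gen_fun g z\<bar> \<le> 1"
      using gen_bounds[OF f, of z] gen_bounds[OF g, of z] z by auto
    have p: "(1/2) powr r \<le> \<bar>1 - z\<bar> powr r" using True r by (intro powr_mono2) auto
    have pp: "0 < (1/2::real) powr r" by simp
    have "\<bar>gen_fun f z - gen_fun g z\<bar> / \<bar>1 - z\<bar> powr r \<le> 1 / (1/2) powr r"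
      using d1 p pp by (intro frac_le) auto
    also have "\<dots> = 2 powr r" by (simp add: powr_divide)
    also have "\<dots> \<le> 2 powr (r + 1)" by (intro powr_mono) auto
    finally show ?thesis by (simp add: le_max_iff_disj)
  next
    case False
    define \<xi> where "\<xi> = - ln z"
    have ez: "exp (- \<xi>) = z" using z by (simp add: \<xi>_def)
    have xi: "0 < \<xi>" using z by (simp add: \<xi>_def)
    have "ln (1/2) \<le> ln z" using False z by (subst ln_le_cancel_iff) auto
    hence xi2: "\<xi> \<le> ln 2" by (simp add: \<xi>_def ln_div)
    have Bb: "\<bar>\<xi>\<bar> / \<bar>1 - z\<bar> \<le> constB" using B_bound[OF xi xi2] ez by simp
    have t1: "ereal (\<bar>lap_fun f \<xi> - lap_fun g \<xi>\<bar> / \<bar>\<xi>\<bar> powr r) \<le> d_star r f g"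
      unfolding d_star_def using xi by (intro SUP_upper) auto
    have t2: "(\<bar>\<xi>\<bar> / \<bar>1 - z\<bar>) powr r \<le> constB powr r"
      using Bb r by (intro powr_mono2) auto
    have eq: "\<bar>gen_fun f z - gen_fun g z\<bar> / \<bar>1 - z\<bar> powr r =
        (\<bar>lap_fun f \<xi> - lap_fun g \<xi>\<bar> / \<bar>\<xi>\<bar> powr r) * (\<bar>\<xi>\<bar> / \<bar>1 - z\<bar>) powr r"
      unfolding lap_gen ez using z xi by (intro ratio_split) auto
    have "ereal (\<bar>gen_fun f z - gen_fun g z\<bar> / \<bar>1 - z\<bar> powr r)
       = ereal ((\<bar>\<xi>\<bar> / \<bar>1 - z\<bar>) powr r) * ereal (\<bar>lap_fun f \<xi> - lap_fun g \<xi>\<bar> / \<bar>\<xi>\<bar> powr r)"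
      unfolding eq by (simp add: mult.commute)
    also have "\<dots> \<le> ereal (constB powr r) * d_star r f g"
      by (rule ereal_mult_mono) (use t1 t2 in auto)
    finally show ?thesis by (simp add: le_max_iff_disj)
  qed
qed

theorem lemmaA5:
  shows "(\<forall>f g (r::real). prob_density f \<longrightarrow> prob_density g \<longrightarrow> 1 \<le> r \<longrightarrow>
            d_star r f g \<le> ereal (constC powr r) * d_metric r f g \<and>
            d_metric r f g \<le> max (ereal (2 powr (r + 1))) (ereal (constB powr r) * d_star r f g))
       \<and> (\<forall>r::real. 1 < r \<and> r \<le> 2 \<longrightarrow>
            (\<exists>c::real. \<forall>f g. prob_density f \<longrightarrow> prob_density g \<longrightarrow>
                moment 1 f = moment 1 g \<longrightarrow> moment r f < \<infinity> \<longrightarrow> moment r g < \<infinity> \<longrightarrow>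
                d_star r f g \<le> ereal c * (moment r f + moment r g)))"
proof (intro conjI allI impI)
  fix f g and r :: real
  assume "prob_density f" "prob_density g" "1 \<le> r"
  then show "d_star r f g \<le> ereal (constC powr r) * d_metric r f g"
    and "d_metric r f g \<le> max (ereal (2 powr (r + 1))) (ereal (constB powr r) * d_star r f g)"
    using part1 part2 by auto
next
  fix r :: real
  assume r: "1 < r \<and> r \<le> 2"
  show "\<exists>c::real. \<forall>f g. prob_density f \<longrightarrow> prob_density g \<longrightarrow>
                moment 1 f = moment 1 g \<longrightarrow> moment r f < \<infinity> \<longrightarrow> moment r g < \<infinity> \<longrightarrow>
                d_star r f g \<le> ereal c * (moment r f + moment r g)"
  proof (intro exI[of _ 1] allI impI)
    fix f g
    assume f: "prob_density f" and g: "prob_density g" and m1: "moment 1 f = moment 1 g"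
      and mf: "moment r f < \<infinity>" and mg: "moment r g < \<infinity>"
    have ef: "moment r f = ereal (\<Sum>v. real v powr r * f v)" using moment_fin[OF f mf] by simp
    have eg: "moment r g = ereal (\<Sum>v. real v powr r * g v)" using moment_fin[OF g mg] by simp
    show "d_star r f g \<le> ereal 1 * (moment r f + moment r g)"
      unfolding d_star_def ef eg
    proof (rule SUP_least)
      fix \<xi> :: real assume "\<xi> \<in> {0<..}"
      then show "ereal (\<bar>lap_fun f \<xi> - lap_fun g \<xi>\<bar> / \<bar>\<xi>\<bar> powr r)
          \<le> ereal 1 * (ereal (\<Sum>v. real v powr r * f v) + ereal (\<Sum>v. real v powr r * g v))"
        using part3_point[OF f g m1 mf mg, of \<xi>] r by simp
    qed
  qed
qed

end
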